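(* Let $(A;R)\in\mathcal C$ and let $X,Y$ be closed sets of $PG(A;R)$. Then $d(X\cup Y)=d(X)+d(Y)-d(X\cap Y)$ if and only if $X\cup Y\le A$ and $R|(X\cup Y)=(R|X)\cup(R|Y)$.
   Context: A set system is a pair $(A;R)$ where $R$ is a set of finite non-empty subsets of $A$; for $X\subseteq A$, $R[X]=\{r\in R:r\subseteq X\}$ and $\delta(X)=|X|-|R[X]|$; also $R|X=R[X]$. $\mathcal C$ is the class of finite set systems with $\delta(X)\ge0$ for all $X\subseteq A$. $X\le A$ means $\delta(X)\le\delta(X')$ for all $X\subseteq X'\subseteq A$. $d(X)=\min\{\delta(Y):X\subseteq Y\subseteq A\}$, $\mathrm{cl}(X)=\{y:d(X\cup\{y\})=d(X)\}$, and $PG(A;R)$ is the matroid $(A,\mathrm{cl})$; closed sets are $F$ with $\mathrm{cl}(F)=F$. *)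

theory Defs
  imports Main
begin

definition set_system :: "'a set \<Rightarrow> 'a set set \<Rightarrow> bool" where
  "set_system A R \<longleftrightarrow> (\<forall>r\<in>R. finite r \<and> r \<noteq> {} \<and> r \<subseteq> A)"

definition restr :: "'a set set \<Rightarrow> 'a set \<Rightarrow> 'a set set" where
  "restr R X = {r \<in> R. r \<subseteq> X}"

definition delta :: "'a set set \<Rightarrow> 'a set \<Rightarrow> int" where
  "delta R X = int (card X) - int (card (restr R X))"

definition classC :: "'a set \<Rightarrow> 'a set set \<Rightarrow> bool" where
  "classC A R \<longleftrightarrow> finite A \<and> set_system A R \<and> (\<forall>X. X \<subseteq> A \<longrightarrow> delta R X \<ge> 0)"

definition le_ss :: "'a set set \<Rightarrow> 'a set \<Rightarrow> 'a set \<Rightarrow> bool" where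
  "le_ss R X A \<longleftrightarrow> X \<subseteq> A \<and> (\<forall>X'. X \<subseteq> X' \<and> X' \<subseteq> A \<longrightarrow> delta R X \<le> delta R X')"

definition dd :: "'a set \<Rightarrow> 'a set set \<Rightarrow> 'a set \<Rightarrow> int" where
  "dd A R X = Min (delta R ` {Y. X \<subseteq> Y \<and> Y \<subseteq> A})"

definition cl :: "'a set \<Rightarrow> 'a set set \<Rightarrow> 'a set \<Rightarrow> 'a set" where
  "cl A R X = {y \<in> A. dd A R (X \<union> {y}) = dd A R X}"

definition closed_PG :: "'a set \<Rightarrow> 'a set set \<Rightarrow> 'a set \<Rightarrow> bool" where
  "closed_PG A R F \<longleftrightarrow> cl A R F = F"

end

theory Submission
  imports Defs
begin

lemma finR: "classC A R \<Longrightarrow> finite R"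
proof -
  assume h: "classC A R"
  hence "R \<subseteq> Pow A" "finite A" unfolding classC_def set_system_def by auto
  thus ?thesis by (meson finite_Pow_iff finite_subset)
qed

lemma restr_int: "restr R (X \<inter> Y) = restr R X \<inter> restr R Y"
  unfolding restr_def by auto

lemma restr_un_sub: "restr R X \<union> restr R Y \<subseteq> restr R (X \<union> Y)"
  unfolding restr_def by auto

lemma delta_modular:
  assumes "finite X" "finite Y" "finite R"
  shows "delta R (X \<union> Y) + delta R (X \<inter> Y) = delta R X + delta R Y
     - int (card (restr R (X \<union> Y) - (restr R X \<union> restr R Y)))"
proof -
  have fr: "finite (restr R Z)" for Z using assms(3) unfolding restr_def by auto
  have c1: "card (X \<union> Y) + card (X \<inter> Y) = card X + card Y"
    using card_Un_Int assms(1,2) by metis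
  have c2: "card (restr R (X \<union> Y)) = card (restr R X \<union> restr R Y)
      + card (restr R (X \<union> Y) - (restr R X \<union> restr R Y))"
  proof -
    let ?U = "restr R X \<union> restr R Y" and ?W = "restr R (X \<union> Y)"
    have e: "?W = ?U \<union> (?W - ?U)" using restr_un_sub[of R X Y] by blast
    have "card (?U \<union> (?W - ?U)) = card ?U + card (?W - ?U)"
      by (rule card_Un_disjoint) (use fr in auto)
    thus ?thesis using e by simp
  qed
  have c3: "card (restr R X \<union> restr R Y) + card (restr R (X \<inter> Y)) = card (restr R X) + card (restr R Y)"
    using card_Un_Int[OF fr fr] restr_int by metis
  show ?thesis unfolding delta_def using c1 c2 c3 by linarith
qed

lemma dd_le:
  assumes "finite A" "Z \<subseteq> Y" "Y \<subseteq> A"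
  shows "dd A R Z \<le> delta R Y"
proof -
  have s: "{Y. Z \<subseteq> Y \<and> Y \<subseteq> A} \<subseteq> Pow A" by blast
  have f: "finite {Y. Z \<subseteq> Y \<and> Y \<subseteq> A}" using finite_subset[OF s] assms(1) by simp
  have "delta R Y \<in> delta R ` {Y. Z \<subseteq> Y \<and> Y \<subseteq> A}" using assms(2,3) by blast
  thus ?thesis unfolding dd_def using f by (intro Min_le) simp_all
qed

lemma dd_attained:
  assumes "finite A" "Z \<subseteq> A"
  shows "\<exists>Y. Z \<subseteq> Y \<and> Y \<subseteq> A \<and> dd A R Z = delta R Y"
proof -
  have s: "{Y. Z \<subseteq> Y \<and> Y \<subseteq> A} \<subseteq> Pow A" by blast
  have f: "finite {Y. Z \<subseteq> Y \<and> Y \<subseteq> A}" using finite_subset[OF s] assms(1) by simp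
  have ne: "{Y. Z \<subseteq> Y \<and> Y \<subseteq> A} \<noteq> {}" using assms(2) by blast
  have "dd A R Z \<in> delta R ` {Y. Z \<subseteq> Y \<and> Y \<subseteq> A}" unfolding dd_def
    using f ne by (intro Min_in) simp_all
  thus ?thesis by blast
qed

lemma dd_mono:
  assumes "finite A" "Z \<subseteq> Z'" "Z' \<subseteq> A"
  shows "dd A R Z \<le> dd A R Z'"
proof -
  obtain Y where Y: "Z' \<subseteq> Y" "Y \<subseteq> A" "dd A R Z' = delta R Y" using dd_attained[OF assms(1) assms(3), of R] by blast
  have "Z \<subseteq> Y" using Y assms by blast
  from dd_le[OF assms(1) this Y(2)] show ?thesis using Y(3) by simp
qed

lemma dd_eq_iff:
  assumes "finite A" "Z \<subseteq> A"
  shows "dd A R Z = delta R Z \<longleftrightarrow> le_ss R Z A"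
proof
  assume h: "dd A R Z = delta R Z"
  show "le_ss R Z A" unfolding le_ss_def
  proof (intro conjI allI impI)
    show "Z \<subseteq> A" by fact
    fix X' assume x: "Z \<subseteq> X' \<and> X' \<subseteq> A"
    have "dd A R Z \<le> delta R X'" using dd_le[OF assms(1), of Z X' R] x by simp
    thus "delta R Z \<le> delta R X'" using h by simp
  qed
next
  assume h: "le_ss R Z A"
  obtain Y where Y: "Z \<subseteq> Y" "Y \<subseteq> A" "dd A R Z = delta R Y" using dd_attained[OF assms, of R] by blast
  have "delta R Z \<le> delta R Y" using h Y unfolding le_ss_def by blast
  moreover have "dd A R Z \<le> delta R Z" using dd_le[OF assms(1) order_refl assms(2)] .
  ultimately show "dd A R Z = delta R Z" using Y(3) by simp
qed

lemma closed_le: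
  assumes "classC A R" "closed_PG A R X"
  shows "le_ss R X A"
proof -
  have fA: "finite A" using assms(1) unfolding classC_def by auto
  have XA: "X \<subseteq> A" using assms(2) unfolding closed_PG_def cl_def by blast
  obtain Y where Y: "X \<subseteq> Y" "Y \<subseteq> A" "dd A R X = delta R Y" using dd_attained[OF fA XA, of R] by blast
  have "Y = X"
  proof (rule ccontr)
    assume "Y \<noteq> X"
    then obtain y where y: "y \<in> Y" "y \<notin> X" using Y by blast
    have "dd A R (X \<union> {y}) \<le> delta R Y" using dd_le[OF fA _ Y(2)] Y y by auto
    moreover have "dd A R X \<le> dd A R (X \<union> {y})" using dd_mono[OF fA, of X "X \<union> {y}" R] Y y by blast
    ultimately have "y \<in> cl A R X" unfolding cl_def using Y y by auto
    thus False using assms(2) y unfolding closed_PG_def by auto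
  qed
  thus ?thesis using dd_eq_iff[OF fA XA] Y by auto
qed

lemma le_ss_int:
  assumes "classC A R" "le_ss R X A" "le_ss R Y A"
  shows "le_ss R (X \<inter> Y) A"
proof -
  have fA: "finite A" and fR: "finite R" using assms(1) finR unfolding classC_def by auto
  have XA: "X \<subseteq> A" "Y \<subseteq> A" using assms unfolding le_ss_def by auto
  have sub: "delta R (U \<union> V) + delta R (U \<inter> V) \<le> delta R U + delta R V" if "U \<subseteq> A" "V \<subseteq> A" for U V
    using delta_modular[of U V R] finite_subset[OF that(1) fA] finite_subset[OF that(2) fA] fR by linarith
  show ?thesis unfolding le_ss_def
  proof (intro conjI allI impI)
    show "X \<inter> Y \<subseteq> A" using XA by auto
    fix Z assume Z: "X \<inter> Y \<subseteq> Z \<and> Z \<subseteq> A"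
    have "delta R X \<le> delta R (Z \<union> X)" using assms(2) Z XA unfolding le_ss_def by auto
    hence a: "delta R (Z \<inter> X) \<le> delta R Z" using sub[of Z X] Z XA by linarith
    have "Z \<inter> X \<union> Y \<subseteq> A" using Z XA by auto
    hence "delta R Y \<le> delta R ((Z \<inter> X) \<union> Y)" using assms(3) unfolding le_ss_def by blast
    moreover have "Z \<inter> X \<subseteq> A" using Z by blast
    ultimately have "delta R (Z \<inter> X \<inter> Y) \<le> delta R (Z \<inter> X)" using sub[of "Z \<inter> X" Y] XA by linarith
    moreover have "Z \<inter> X \<inter> Y = X \<inter> Y" using Z by auto
    ultimately show "delta R (X \<inter> Y) \<le> delta R Z" using a by simp
  qed
qed

theorem lemma6p2:
  fixes A :: "'a set" and R :: "'a set set" and X Y :: "'a set"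
  assumes "classC A R"
    and "closed_PG A R X" and "closed_PG A R Y"
  shows "dd A R (X \<union> Y) = dd A R X + dd A R Y - dd A R (X \<inter> Y)
     \<longleftrightarrow> (le_ss R (X \<union> Y) A \<and> restr R (X \<union> Y) = restr R X \<union> restr R Y)"
proof -
  have fA: "finite A" and fR: "finite R" using assms(1) finR unfolding classC_def by auto
  have lX: "le_ss R X A" and lY: "le_ss R Y A" using closed_le assms by auto
  have XA: "X \<subseteq> A" "Y \<subseteq> A" using lX lY unfolding le_ss_def by auto
  have lI: "le_ss R (X \<inter> Y) A" using le_ss_int assms(1) lX lY by blast
  have eX: "dd A R X = delta R X" using dd_eq_iff[OF fA XA(1)] lX by auto
  have eY: "dd A R Y = delta R Y" using dd_eq_iff[OF fA XA(2)] lY by auto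
  have eI: "dd A R (X \<inter> Y) = delta R (X \<inter> Y)" using dd_eq_iff[OF fA, of "X \<inter> Y" R] XA lI by blast
  have UA: "X \<union> Y \<subseteq> A" using XA by auto
  have eU: "dd A R (X \<union> Y) = delta R (X \<union> Y) \<longleftrightarrow> le_ss R (X \<union> Y) A" using dd_eq_iff[OF fA UA] .
  have leU: "dd A R (X \<union> Y) \<le> delta R (X \<union> Y)" using dd_le[OF fA order_refl UA] .
  define D where "D = restr R (X \<union> Y) - (restr R X \<union> restr R Y)"
  have fD: "finite D" unfolding D_def restr_def using fR by auto
  have mod: "delta R (X \<union> Y) + delta R (X \<inter> Y) = delta R X + delta R Y - int (card D)"
    unfolding D_def using delta_modular[of X Y R] finite_subset[OF XA(1) fA] finite_subset[OF XA(2) fA] fR by blast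
  have Deq: "card D = 0 \<longleftrightarrow> restr R (X \<union> Y) = restr R X \<union> restr R Y"
    using fD restr_un_sub[of R X Y] unfolding D_def by auto
  show ?thesis using eX eY eI eU leU mod Deq by linarith
qed

end
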